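(* Let $A$ be a complex evolution algebra which is not a non-zero trivial evolution algebra, with natural basis $B=\{e_i:i\in\Lambda\}$ and $e_j^2=\sum_i\omega_{ij}e_i$. Let $0\neq a=\sum_{i\in\Lambda_a}\alpha_ie_i\in A$, and set $B^0(a)=\{e_i:i\in\Lambda_a\}$ and $B^1(a)=\bigcup_{i\in\Lambda_a}\{e_j:\omega_{ji}\neq0\}$. Enumerate so that $B^0(a)=\{e_1,\dots,e_k\}$ and $B^0(a)\cup B^1(a)=\{e_1,\dots,e_k,e_{k+1},\dots,e_m\}$, and put $\alpha_{k+1}=\dots=\alpha_m=0$, $W_m=(\omega_{ij})_{i,j=1}^m$, $D=\mathrm{diag}(\alpha_1,\dots,\alpha_m)$. Then for $\lambda\in\mathbb{C}$: (i) $\lambda\in\sigma^A_m(a)$ if and only if $\lambda=0$ or $\lambda$ is an eigenvalue of $W_mD$; (ii) $\lambda\in\sigma^A(a)$ if and only if $\lambda=0$ or the system $(W_mD-\lambda I_m)\beta=(\alpha_1,\dots,\alpha_m)^T$ has no solution $\beta\in\mathbb{C}^m$ (in which case $\lambda\in\sigma^A_m(a)$).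
   Context: An evolution algebra is an algebra with a basis $\{e_i:i\in\Lambda\}$ (natural basis) with $e_ie_j=0$ for $i\neq j$; each $e_j^2$ has finitely many nonzero coefficients. A non-zero trivial evolution algebra has a natural basis with $e_i^2=\omega_{ii}e_i$, $\omega_{ii}\neq0$ for all $i$. Support $\Lambda_a=\{i:\alpha_i\neq0\}$. For a complex algebra $A$: if $A$ has a unit $e$ put $\tilde A=A$, else $\tilde A=A\oplus\mathbb{C}\mathbf1$ is the unitization with product $(a+\lambda\mathbf1)(b+\mu\mathbf1)=ab+\lambda b+\mu a+\lambda\mu\mathbf1$ and $e=\mathbf1$. $x\in\tilde A$ is invertible if it has a left and a right inverse, and m-invertible if $L_x(y)=xy$ and $R_x(y)=yx$ are bijective on $\tilde A$. $\sigma^A(a)=\{\lambda:a-\lambda e\text{ not invertible in }\tilde A\}$ and $\sigma^A_m(a)=\{\lambda:a-\lambda e\text{ not m-invertible in }\tilde A\}$. *)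

theory Defs
  imports Complex_Main "Jordan_Normal_Form.Char_Poly"
begin

text \<open>A complex evolution algebra with natural basis indexed by the type 'i.
  Elements are finitely supported coefficient functions x (x = sum of x i e_i).
  The structure constants are w i j, where e_j^2 = sum_i w i j e_i.\<close>

definition evol_carrier :: "('i \<Rightarrow> complex) set" where
  "evol_carrier = {x. finite {i. x i \<noteq> 0}}"

definition evol_coeffs :: "('i \<Rightarrow> 'i \<Rightarrow> complex) \<Rightarrow> bool" where
  "evol_coeffs w \<longleftrightarrow> (\<forall>j. finite {i. w i j \<noteq> 0})"

text \<open>Product: (sum x_j e_j)(sum y_j e_j) = sum_j x_j y_j e_j^2.\<close>
definition evol_mult :: "('i \<Rightarrow> 'i \<Rightarrow> complex) \<Rightarrow> ('i \<Rightarrow> complex) \<Rightarrow> ('i \<Rightarrow> complex) \<Rightarrow> ('i \<Rightarrow> complex)" where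
  "evol_mult w x y = (\<lambda>i. \<Sum>j\<in>{j. x j \<noteq> 0}. x j * y j * w i j)"

definition supp_el :: "('i \<Rightarrow> complex) \<Rightarrow> 'i set" where
  "supp_el x = {i. x i \<noteq> 0}"

definition is_basis_of_A :: "('i \<Rightarrow> complex) set \<Rightarrow> bool" where
  "is_basis_of_A S \<longleftrightarrow> S \<subseteq> evol_carrier
     \<and> (\<forall>T c. T \<subseteq> S \<and> finite T \<and> (\<lambda>i. \<Sum>t\<in>T. c t * t i) = (\<lambda>i. 0) \<longrightarrow> (\<forall>t\<in>T. c t = 0))
     \<and> (\<forall>x\<in>evol_carrier. \<exists>T c. T \<subseteq> S \<and> finite T \<and> x = (\<lambda>i. \<Sum>t\<in>T. c t * t i))"

definition is_natural_basis :: "('i \<Rightarrow> 'i \<Rightarrow> complex) \<Rightarrow> ('i \<Rightarrow> complex) set \<Rightarrow> bool" where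
  "is_natural_basis w S \<longleftrightarrow> is_basis_of_A S
     \<and> (\<forall>s\<in>S. \<forall>t\<in>S. s \<noteq> t \<longrightarrow> evol_mult w s t = (\<lambda>i. 0))"

text \<open>Non-zero trivial evolution algebra: A is non-zero and has a natural basis with
  e^2 = c e, c nonzero, for every basis element. (A is non-zero automatically,
  since the index type is non-empty.)\<close>
definition nonzero_trivial_evol :: "('i \<Rightarrow> 'i \<Rightarrow> complex) \<Rightarrow> bool" where
  "nonzero_trivial_evol w \<longleftrightarrow> evol_carrier \<noteq> {(\<lambda>i::'i. 0)} \<and>
     (\<exists>S. is_natural_basis w S \<and> (\<forall>s\<in>S. \<exists>c. c \<noteq> 0 \<and> evol_mult w s s = (\<lambda>i. c * s i)))"

definition is_unit_of_A :: "('i \<Rightarrow> 'i \<Rightarrow> complex) \<Rightarrow> ('i \<Rightarrow> complex) \<Rightarrow> bool" where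
  "is_unit_of_A w u \<longleftrightarrow> u \<in> evol_carrier \<and>
     (\<forall>x\<in>evol_carrier. evol_mult w u x = x \<and> evol_mult w x u = x)"

text \<open>Unitization A + C1, elements (x, mu) standing for x + mu 1.\<close>
definition unitz_mult :: "('i \<Rightarrow> 'i \<Rightarrow> complex) \<Rightarrow> ('i \<Rightarrow> complex) \<times> complex \<Rightarrow> ('i \<Rightarrow> complex) \<times> complex \<Rightarrow> ('i \<Rightarrow> complex) \<times> complex" where
  "unitz_mult w p q = (\<lambda>i. evol_mult w (fst p) (fst q) i + snd p * fst q i + snd q * fst p i, snd p * snd q)"

definition invertible_in :: "'a set \<Rightarrow> ('a \<Rightarrow> 'a \<Rightarrow> 'a) \<Rightarrow> 'a \<Rightarrow> 'a \<Rightarrow> bool" where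
  "invertible_in C m e x \<longleftrightarrow> (\<exists>y\<in>C. m y x = e) \<and> (\<exists>z\<in>C. m x z = e)"

definition m_invertible_in :: "'a set \<Rightarrow> ('a \<Rightarrow> 'a \<Rightarrow> 'a) \<Rightarrow> 'a \<Rightarrow> bool" where
  "m_invertible_in C m x \<longleftrightarrow> bij_betw (m x) C C \<and> bij_betw (\<lambda>y. m y x) C C"

definition evol_spectrum :: "('i \<Rightarrow> 'i \<Rightarrow> complex) \<Rightarrow> ('i \<Rightarrow> complex) \<Rightarrow> complex set" where
  "evol_spectrum w a =
     (if \<exists>u. is_unit_of_A w u then
        (let u = (SOME u. is_unit_of_A w u) in
          {l. \<not> invertible_in evol_carrier (evol_mult w) u (\<lambda>i. a i - l * u i)})
      else {l. \<not> invertible_in (evol_carrier \<times> UNIV) (unitz_mult w) ((\<lambda>i. 0), 1) (a, - l)})"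

definition evol_m_spectrum :: "('i \<Rightarrow> 'i \<Rightarrow> complex) \<Rightarrow> ('i \<Rightarrow> complex) \<Rightarrow> complex set" where
  "evol_m_spectrum w a =
     (if \<exists>u. is_unit_of_A w u then
        (let u = (SOME u. is_unit_of_A w u) in
          {l. \<not> m_invertible_in evol_carrier (evol_mult w) (\<lambda>i. a i - l * u i)})
      else {l. \<not> m_invertible_in (evol_carrier \<times> UNIV) (unitz_mult w) (a, - l)})"

definition B1_idx :: "('i \<Rightarrow> 'i \<Rightarrow> complex) \<Rightarrow> ('i \<Rightarrow> complex) \<Rightarrow> 'i set" where
  "B1_idx w a = {j. \<exists>i\<in>supp_el a. w j i \<noteq> 0}"

text \<open>W_m and D w.r.t. an enumeration f of B^0(a) union B^1(a) by 0..m-1.\<close>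
definition W_mat :: "('i \<Rightarrow> 'i \<Rightarrow> complex) \<Rightarrow> (nat \<Rightarrow> 'i) \<Rightarrow> nat \<Rightarrow> complex mat" where
  "W_mat w f m = mat m m (\<lambda>(i, j). w (f i) (f j))"

definition D_mat :: "('i \<Rightarrow> complex) \<Rightarrow> (nat \<Rightarrow> 'i) \<Rightarrow> nat \<Rightarrow> complex mat" where
  "D_mat a f m = mat m m (\<lambda>(i, j). if i = j then a (f i) else 0)"

end

theory Submission imports Defs begin


locale evsetup =
  fixes w :: "'i \<Rightarrow> 'i \<Rightarrow> complex" and a :: "'i \<Rightarrow> complex" and f :: "nat \<Rightarrow> 'i" and m :: nat
  assumes bij: "bij_betw f {0..<m} (supp_el a \<union> B1_idx w a)"
begin

abbreviation "S \<equiv> supp_el a \<union> B1_idx w a"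
abbreviation "M \<equiv> W_mat w f m * D_mat a f m"
definition "g = the_inv_into {0..<m} f"

lemma finS: "finite S" using bij_betw_finite[OF bij] by simp
lemma injf: "inj_on f {0..<m}" by (rule bij_betw_imp_inj_on[OF bij])
lemma imf: "f ` {0..<m} = S" by (rule bij_betw_imp_surj_on[OF bij])
lemma fS: "q < m \<Longrightarrow> f q \<in> S"
proof -
  assume "q < m"
  then have "f q \<in> f ` {0..<m}" by simp
  then show "f q \<in> S" by (simp only: imf)
qed
lemma gf: "q < m \<Longrightarrow> g (f q) = q"
  unfolding g_def using injf by (simp add: the_inv_into_f_f)
lemma gS: "i \<in> S \<Longrightarrow> g i < m \<and> f (g i) = i"
proof -
  assume "i \<in> S"
  then obtain q where q: "q \<in> {0..<m}" and iq: "i = f q" using imf by blast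
  then show ?thesis using gf by simp
qed
lemma a_out: "i \<notin> S \<Longrightarrow> a i = 0" by (auto simp: supp_el_def)

lemma em_out: "i \<notin> S \<Longrightarrow> evol_mult w a y i = 0"
  unfolding evol_mult_def by (rule sum.neutral) (auto simp: B1_idx_def supp_el_def)

lemma em_reindex: "evol_mult w a y i = (\<Sum>q\<in>{0..<m}. w i (f q) * a (f q) * y (f q))"
proof -
  have "evol_mult w a y i = (\<Sum>j\<in>supp_el a. a j * y j * w i j)"
    by (simp add: evol_mult_def supp_el_def)
  also have "\<dots> = (\<Sum>j\<in>S. a j * y j * w i j)"
    by (rule sum.mono_neutral_left) (use finS in \<open>auto simp: supp_el_def\<close>)
  also have "\<dots> = (\<Sum>q\<in>{0..<m}. a (f q) * y (f q) * w i (f q))"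
    using sum.reindex_bij_betw[OF bij, of "\<lambda>j. a j * y j * w i j"] by simp
  finally show ?thesis by (simp add: ac_simps)
qed

lemma Mcar: "M \<in> carrier_mat m m" by (rule mult_carrier_mat) (auto simp: W_mat_def D_mat_def)

lemma Mentry: "p < m \<Longrightarrow> q < m \<Longrightarrow> M $$ (p,q) = w (f p) (f q) * a (f q)"
proof -
  assume p: "p < m" and q: "q < m"
  have "M $$ (p,q) = (\<Sum>r\<in>{0..<m}. w (f p) (f r) * (if r = q then a (f r) else 0))"
    using p q by (simp add: W_mat_def D_mat_def scalar_prod_def)
  also have "\<dots> = (\<Sum>r\<in>{0..<m}. (if r = q then w (f p) (f r) * a (f r) else 0))"
    by (rule sum.cong) auto
  also have "\<dots> = w (f p) (f q) * a (f q)"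
    using q by (simp add: sum.delta')
  finally show ?thesis .
qed

lemma Mv: assumes p: "p < m" and b: "\<beta> \<in> carrier_vec m"
  shows "(M *\<^sub>v \<beta>) $ p = (\<Sum>q\<in>{0..<m}. w (f p) (f q) * a (f q) * \<beta> $ q)"
proof -
  have dM: "dim_row M = m" by (simp add: W_mat_def)
  have dC: "dim_col M = m" by (simp add: D_mat_def)
  have "(M *\<^sub>v \<beta>) $ p = row M p \<bullet> \<beta>" using dM p by simp
  also have "\<dots> = (\<Sum>q\<in>{0..<m}. M $$ (p,q) * \<beta> $ q)"
    using dC dM p b by (simp add: scalar_prod_def)
  also have "\<dots> = (\<Sum>q\<in>{0..<m}. w (f p) (f q) * a (f q) * \<beta> $ q)"
    using p by (intro sum.cong) (auto simp: Mentry)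
  finally show ?thesis .
qed

lemma Iv: fixes l :: complex assumes p: "p < m" and b: "\<beta> \<in> carrier_vec m"
  shows "((l \<cdot>\<^sub>m 1\<^sub>m m) *\<^sub>v \<beta>) $ p = l * \<beta> $ p"
proof -
  have d: "dim_row (l \<cdot>\<^sub>m 1\<^sub>m m) = m" by simp
  have "((l \<cdot>\<^sub>m 1\<^sub>m m) *\<^sub>v \<beta>) $ p = row (l \<cdot>\<^sub>m 1\<^sub>m m) p \<bullet> \<beta>"
    using p d by (simp only: index_mult_mat_vec)
  also have "row (l \<cdot>\<^sub>m 1\<^sub>m m) p = l \<cdot>\<^sub>v unit_vec m p"
    using p by (simp only: row_smult row_one index_one_mat(2))
  also have "(l \<cdot>\<^sub>v unit_vec m p) \<bullet> \<beta> = l * (unit_vec m p \<bullet> \<beta>)"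
    using b by (intro scalar_prod_smult_left) simp
  also have "unit_vec m p \<bullet> \<beta> = \<beta> $ p" using b p by (rule scalar_prod_left_unit)
  finally show ?thesis .
qed

lemma Nv: assumes p: "p < m" and b: "\<beta> \<in> carrier_vec m"
  shows "((M - l \<cdot>\<^sub>m 1\<^sub>m m) *\<^sub>v \<beta>) $ p = (M *\<^sub>v \<beta>) $ p - l * \<beta> $ p"
proof -
  have I: "l \<cdot>\<^sub>m 1\<^sub>m m \<in> carrier_mat m m" by simp
  have "(M - l \<cdot>\<^sub>m 1\<^sub>m m) *\<^sub>v \<beta> = M *\<^sub>v \<beta> - (l \<cdot>\<^sub>m 1\<^sub>m m) *\<^sub>v \<beta>"
    by (rule minus_mult_distrib_mat_vec[OF Mcar I b])
  then have "((M - l \<cdot>\<^sub>m 1\<^sub>m m) *\<^sub>v \<beta>) $ p = (M *\<^sub>v \<beta> - (l \<cdot>\<^sub>m 1\<^sub>m m) *\<^sub>v \<beta>) $ p"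
    by (rule arg_cong)
  also have "\<dots> = (M *\<^sub>v \<beta>) $ p - ((l \<cdot>\<^sub>m 1\<^sub>m m) *\<^sub>v \<beta>) $ p"
    by (rule index_minus_vec(1)) (use p in simp)
  also have "((l \<cdot>\<^sub>m 1\<^sub>m m) *\<^sub>v \<beta>) $ p = l * \<beta> $ p" by (rule Iv[OF p b])
  finally show ?thesis .
qed

lemma em_lin: "evol_mult w a (\<lambda>i. y i - y' i) i = evol_mult w a y i - evol_mult w a y' i"
  unfolding em_reindex by (simp add: algebra_simps sum_subtractf)

lemma em_scale: "evol_mult w a (\<lambda>i. c * y i) i = c * evol_mult w a y i"
  unfolding em_reindex by (simp add: algebra_simps sum_distrib_left)

lemma em_vec: assumes p: "p < m" and b: "\<beta> \<in> carrier_vec m"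
  and yv: "\<And>q. q < m \<Longrightarrow> y (f q) = \<beta> $ q"
  shows "evol_mult w a y (f p) = (M *\<^sub>v \<beta>) $ p"
  unfolding em_reindex Mv[OF p b] by (rule sum.cong) (auto simp: yv)

lemma Ncar: "M - l \<cdot>\<^sub>m 1\<^sub>m m \<in> carrier_mat m m"
  by (rule minus_carrier_mat) simp

end


lemma em_comm:
  assumes "x \<in> evol_carrier" "y \<in> evol_carrier"
  shows "evol_mult w x y = evol_mult w y x"
proof
  fix i
  let ?X = "{j. x j \<noteq> 0}" and ?Y = "{j. y j \<noteq> 0}"
  have fX: "finite ?X" and fY: "finite ?Y" using assms by (auto simp: evol_carrier_def)
  have A: "evol_mult w x y i = (\<Sum>j\<in>?Y \<union> ?X. x j * y j * w i j)"
    unfolding evol_mult_def by (rule sum.mono_neutral_left) (use fX fY in auto)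
  also have "\<dots> = (\<Sum>j\<in>?Y \<union> ?X. y j * x j * w i j)"
    by (rule sum.cong) (auto simp: ac_simps)
  also have "\<dots> = evol_mult w y x i"
    unfolding evol_mult_def by (rule sum.mono_neutral_left[symmetric]) (use fX fY in auto)
  finally show "evol_mult w x y i = evol_mult w y x i" .
qed

lemma minv_inv: "m_invertible_in C m x \<Longrightarrow> e \<in> C \<Longrightarrow> invertible_in C m e x"
proof -
  assume b: "m_invertible_in C m x" and e: "e \<in> C"
  have i1: "e \<in> m x ` C" and i2: "e \<in> (\<lambda>y. m y x) ` C"
    using b e by (auto simp: m_invertible_in_def bij_betw_def)
  obtain z where z: "e = m x z" "z \<in> C" using i1 by (rule imageE)
  obtain y where y: "e = m y x" "y \<in> C" using i2 by (rule imageE)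
  show ?thesis unfolding invertible_in_def using z y by auto
qed

lemma U_simp: "unitz_mult w (x,\<mu>) (y,\<nu>) = (\<lambda>i. evol_mult w x y i + \<mu> * y i + \<nu> * x i, \<mu> * \<nu>)"
  by (simp add: unitz_mult_def)

lemma U_comm:
  assumes "x \<in> evol_carrier" "y \<in> evol_carrier"
  shows "unitz_mult w (x,\<mu>) (y,\<nu>) = unitz_mult w (y,\<nu>) (x,\<mu>)"
  using em_comm[OF assms, of w] by (simp add: U_simp ac_simps)

lemma no_unit:
  assumes nt: "\<not> nonzero_trivial_evol w" shows "\<not> is_unit_of_A w u"
proof
  assume u: "is_unit_of_A w u"
  define e where "e j = (\<lambda>i. if i = j then (1::complex) else 0)" for j :: 'a
  have ecar: "e j \<in> evol_carrier" for j
  proof -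
    have "{i. e j i \<noteq> 0} = {j}" by (auto simp: e_def)
    then show ?thesis by (simp add: evol_carrier_def)
  qed
  have ucar: "u \<in> evol_carrier" using u by (simp add: is_unit_of_A_def)
  have em_e: "evol_mult w x (e j) = (\<lambda>i. if x j \<noteq> 0 then x j * w i j else 0)"
    if "x \<in> evol_carrier" for x j
  proof
    fix i
    have fin: "finite {k. x k \<noteq> 0}" using that by (simp add: evol_carrier_def)
    have "evol_mult w x (e j) i = (\<Sum>k\<in>{k. x k \<noteq> 0}. if k = j then x k * w i k else 0)"
      unfolding evol_mult_def by (rule sum.cong) (auto simp: e_def)
    also have "\<dots> = (if x j \<noteq> 0 then x j * w i j else 0)"
      using fin by (simp add: sum.delta')
    finally show "evol_mult w x (e j) i = (if x j \<noteq> 0 then x j * w i j else 0)" .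
  qed
  have ue: "evol_mult w u (e j) = e j" for j using u ecar by (simp add: is_unit_of_A_def)
  have uj: "u j \<noteq> 0 \<and> u j * w j j = 1" for j
    using fun_cong[OF ue[of j], of j] em_e[OF ucar, of j] by (auto simp: e_def split: if_splits)
  have wij: "i \<noteq> j \<Longrightarrow> w i j = 0" for i j
    using fun_cong[OF ue[of j], of i] em_e[OF ucar, of j] uj[of j] by (auto simp: e_def split: if_splits)
  have einj: "e j = e k \<longleftrightarrow> j = k" for j k
  proof
    assume "e j = e k"
    then have "e j j = e k j" by simp
    then show "j = k" by (auto simp: e_def split: if_splits)
  qed simp
  have ej: "t \<in> range e \<Longrightarrow> t j = (if t = e j then 1 else 0)" for t j
    using einj by (auto simp: e_def)
  have basis: "is_basis_of_A (range e)"
    unfolding is_basis_of_A_def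
  proof (intro conjI allI impI ballI)
    show "range e \<subseteq> evol_carrier" using ecar by auto
  next
    fix T c t
    assume H: "T \<subseteq> range e \<and> finite T \<and> (\<lambda>i. \<Sum>t\<in>T. c t * t i) = (\<lambda>i. 0)" and t: "t \<in> T"
    then obtain j where tj: "t = e j" by auto
    have "0 = (\<Sum>t'\<in>T. c t' * t' j)" using fun_cong[OF conjunct2[OF conjunct2[OF H]], of j] by simp
    also have "\<dots> = (\<Sum>t'\<in>T. if t' = t then c t' else 0)"
      using H tj by (intro sum.cong) (auto simp: ej)
    also have "\<dots> = c t" using H t by (simp add: sum.delta')
    finally show "c t = 0" by simp
  next
    fix x :: "'a \<Rightarrow> complex" assume x: "x \<in> evol_carrier"
    let ?X = "{j. x j \<noteq> 0}"
    have fX: "finite ?X" using x by (simp add: evol_carrier_def)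
    have inje: "inj e" using einj by (auto simp: inj_def)
    have "x = (\<lambda>i. \<Sum>t\<in>e ` ?X. x (inv_into UNIV e t) * t i)"
    proof
      fix i
      have "(\<Sum>t\<in>e ` ?X. x (inv_into UNIV e t) * t i) = (\<Sum>j\<in>?X. x j * e j i)"
        using inje by (simp add: sum.reindex inj_on_def inv_into_f_f)
      also have "\<dots> = (\<Sum>j\<in>?X. if j = i then x j else 0)"
        by (rule sum.cong) (auto simp: e_def)
      also have "\<dots> = x i" using fX by (simp add: sum.delta')
      finally show "x i = (\<Sum>t\<in>e ` ?X. x (inv_into UNIV e t) * t i)" by simp
    qed
    then show "\<exists>T c. T \<subseteq> range e \<and> finite T \<and> x = (\<lambda>i. \<Sum>t\<in>T. c t * t i)"
      by (intro exI[where x="e ` ?X"] exI[where x="\<lambda>t. x (inv_into UNIV e t)"] conjI) (use fX in auto)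
  qed
  have orth: "\<forall>s\<in>range e. \<forall>t\<in>range e. s \<noteq> t \<longrightarrow> evol_mult w s t = (\<lambda>i. 0)"
  proof (intro ballI impI)
    fix s t assume "s \<in> range e" "t \<in> range e" "s \<noteq> t"
    then obtain j k where "s = e j" "t = e k" "j \<noteq> k" by auto
    then show "evol_mult w s t = (\<lambda>i. 0)" using em_e[OF ecar[of j], of k] by (simp add: e_def)
  qed
  have triv: "\<forall>s\<in>range e. \<exists>c. c \<noteq> 0 \<and> evol_mult w s s = (\<lambda>i. c * s i)"
  proof
    fix s assume "s \<in> range e"
    then obtain j where sj: "s = e j" by auto
    have "w j j \<noteq> 0" using uj[of j] by auto
    moreover have "evol_mult w s s = (\<lambda>i. w j j * s i)"
      using em_e[OF ecar[of j], of j] sj wij by (auto simp: e_def)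
    ultimately show "\<exists>c. c \<noteq> 0 \<and> evol_mult w s s = (\<lambda>i. c * s i)" by blast
  qed
  have nz: "evol_carrier \<noteq> {(\<lambda>i::'a. 0)}"
  proof
    assume "evol_carrier = {(\<lambda>i::'a. 0)}"
    then have "e undefined = (\<lambda>i. 0)" using ecar by blast
    then have "e undefined undefined = 0" by simp
    then show False by (simp add: e_def)
  qed
  have "nonzero_trivial_evol w"
    unfolding nonzero_trivial_evol_def is_natural_basis_def
    using nz basis orth triv by blast
  with nt show False by simp
qed



context evsetup begin

abbreviation "C' \<equiv> (evol_carrier :: ('i \<Rightarrow> complex) set) \<times> (UNIV :: complex set)"

lemma supp_sub_car: "finite A \<Longrightarrow> {i. y i \<noteq> 0} \<subseteq> A \<Longrightarrow> y \<in> evol_carrier"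
  unfolding evol_carrier_def using finite_subset by blast

lemma key1:
  assumes l: "l \<noteq> 0" and acar: "a \<in> evol_carrier"
  shows "invertible_in C' (unitz_mult w) ((\<lambda>i. 0), 1) (a, -l) \<longleftrightarrow>
    (\<exists>\<beta>\<in>carrier_vec m. (M - l \<cdot>\<^sub>m 1\<^sub>m m) *\<^sub>v \<beta> = vec m (\<lambda>i. a (f i)))"
proof
  assume "invertible_in C' (unitz_mult w) ((\<lambda>i. 0), 1) (a, -l)"
  then obtain y \<nu> where yc: "y \<in> evol_carrier" and z: "unitz_mult w (a,-l) (y,\<nu>) = ((\<lambda>i. 0), 1)"
    unfolding invertible_in_def by auto
  have eq: "evol_mult w a y i + (-l) * y i + \<nu> * a i = 0" for i
    using fun_cong[OF arg_cong[OF z, of fst], of i] by (simp add: U_simp)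
  have ln: "-l * \<nu> = 1" using arg_cong[OF z, of snd] by (simp add: U_simp)
  define \<beta> where "\<beta> = vec m (\<lambda>q. l * y (f q))"
  have bc: "\<beta> \<in> carrier_vec m" by (simp add: \<beta>_def)
  have "(M - l \<cdot>\<^sub>m 1\<^sub>m m) *\<^sub>v \<beta> = vec m (\<lambda>i. a (f i))"
  proof (rule eq_vecI)
    show "dim_vec ((M - l \<cdot>\<^sub>m 1\<^sub>m m) *\<^sub>v \<beta>) = dim_vec (vec m (\<lambda>i. a (f i)))"
      using Ncar[of l] by simp
  next
    fix p assume "p < dim_vec (vec m (\<lambda>i. a (f i)))"
    then have p: "p < m" by simp
    have "(M *\<^sub>v \<beta>) $ p = evol_mult w a (\<lambda>i. l * y i) (f p)"
      by (rule em_vec[OF p bc, symmetric]) (simp add: \<beta>_def)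
    also have "\<dots> = l * evol_mult w a y (f p)" by (rule em_scale)
    finally have Mb: "(M *\<^sub>v \<beta>) $ p = l * evol_mult w a y (f p)" .
    have e1: "evol_mult w a y (f p) = l * y (f p) - \<nu> * a (f p)" using eq[of "f p"] by (simp add: algebra_simps)
    have "((M - l \<cdot>\<^sub>m 1\<^sub>m m) *\<^sub>v \<beta>) $ p = l * (l * y (f p) - \<nu> * a (f p)) - l * (l * y (f p))"
      using Nv[OF p bc] Mb e1 p by (simp add: \<beta>_def)
    also have "\<dots> = (- l * \<nu>) * a (f p)" by (simp add: algebra_simps)
    also have "\<dots> = a (f p)" using ln by simp
    finally show "((M - l \<cdot>\<^sub>m 1\<^sub>m m) *\<^sub>v \<beta>) $ p = vec m (\<lambda>i. a (f i)) $ p" using p by simp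
  qed
  then show "\<exists>\<beta>\<in>carrier_vec m. (M - l \<cdot>\<^sub>m 1\<^sub>m m) *\<^sub>v \<beta> = vec m (\<lambda>i. a (f i))" using bc by blast
next
  assume "\<exists>\<beta>\<in>carrier_vec m. (M - l \<cdot>\<^sub>m 1\<^sub>m m) *\<^sub>v \<beta> = vec m (\<lambda>i. a (f i))"
  then obtain \<beta> where bc: "\<beta> \<in> carrier_vec m" and sol: "(M - l \<cdot>\<^sub>m 1\<^sub>m m) *\<^sub>v \<beta> = vec m (\<lambda>i. a (f i))"
    by blast
  define y0 where "y0 = (\<lambda>i. if i \<in> S then \<beta> $ (g i) else 0)"
  define y where "y = (\<lambda>i. (1/l) * y0 i)"
  define \<nu> where "\<nu> = - 1 / l"
  have yc: "y \<in> evol_carrier" by (rule supp_sub_car[OF finS]) (auto simp: y_def y0_def split: if_splits)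
  have Uy: "unitz_mult w (a,-l) (y,\<nu>) = ((\<lambda>i. 0), 1)"
  proof -
    have "evol_mult w a y i + (-l) * y i + \<nu> * a i = 0" for i
    proof (cases "i \<in> S")
      case True
      obtain p where p: "p < m" and ip: "i = f p"
          by (rule that[of "g i"]) (use gS[OF True] in auto)
      have "evol_mult w a y0 (f p) = (M *\<^sub>v \<beta>) $ p"
        by (rule em_vec[OF p bc]) (use fS gf in \<open>auto simp: y0_def\<close>)
      moreover have "(M *\<^sub>v \<beta>) $ p - l * \<beta> $ p = a (f p)"
        using Nv[OF p bc, of l] arg_cong[OF sol, of "\<lambda>v. v $ p"] p by simp
      moreover have "y0 (f p) = \<beta> $ p" using p fS gf by (simp add: y0_def)
      ultimately show ?thesis using l unfolding ip y_def em_scale \<nu>_def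
        by (simp add: field_simps)
    next
      case False
      then show ?thesis using em_out a_out by (simp add: y_def y0_def)
    qed
    then show ?thesis using l by (simp add: U_simp \<nu>_def)
  qed
  moreover have "unitz_mult w (y,\<nu>) (a,-l) = ((\<lambda>i. 0), 1)"
    using Uy U_comm[OF acar yc] by simp
  ultimately show "invertible_in C' (unitz_mult w) ((\<lambda>i. 0), 1) (a, -l)"
    unfolding invertible_in_def using yc by blast
qed


lemma key2:
  assumes l: "l \<noteq> 0" and acar: "a \<in> evol_carrier"
  shows "m_invertible_in C' (unitz_mult w) (a, -l) \<longleftrightarrow> \<not> eigenvalue M l"
proof -
  let ?L = "unitz_mult w (a, -l)"
  have cong: "bij_betw (\<lambda>y. unitz_mult w y (a, -l)) C' C' \<longleftrightarrow> bij_betw ?L C' C'"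
  proof (rule bij_betw_cong)
    fix p assume "p \<in> C'"
    then obtain y \<nu> where p: "p = (y, \<nu>)" and yc: "y \<in> evol_carrier" by (cases p) auto
    show "unitz_mult w p (a, -l) = ?L p" unfolding p by (rule U_comm[OF yc acar])
  qed
  have dM: "dim_row M = m" by (simp add: W_mat_def)
  have mi: "m_invertible_in C' (unitz_mult w) (a, -l) \<longleftrightarrow> bij_betw ?L C' C'"
    unfolding m_invertible_in_def using cong by simp
  show ?thesis
  proof
    assume bij: "m_invertible_in C' (unitz_mult w) (a, -l)"
    show "\<not> eigenvalue M l"
    proof
      assume "eigenvalue M l"
      then obtain v where vc: "v \<in> carrier_vec m" and v0: "v \<noteq> 0\<^sub>v m" and Mv': "M *\<^sub>v v = l \<cdot>\<^sub>v v"
        unfolding eigenvalue_def eigenvector_def dM by blast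
      define y where "y = (\<lambda>i. if i \<in> S then v $ (g i) else 0)"
      have yc: "y \<in> evol_carrier" by (rule supp_sub_car[OF finS]) (auto simp: y_def split: if_splits)
      have "evol_mult w a y i + (-l) * y i + 0 * a i = 0" for i
      proof (cases "i \<in> S")
        case True
        obtain p where p: "p < m" and ip: "i = f p"
          by (rule that[of "g i"]) (use gS[OF True] in auto)
        have "evol_mult w a y (f p) = (M *\<^sub>v v) $ p"
          by (rule em_vec[OF p vc]) (use fS gf in \<open>auto simp: y_def\<close>)
        also have "\<dots> = l * v $ p" using Mv' p vc by simp
        finally show ?thesis using p fS gf ip by (simp add: y_def)
      next
        case False
        then show ?thesis using em_out by (simp add: y_def)
      qed
      then have L1: "?L (y, 0) = ((\<lambda>i. 0), 0)" by (simp add: U_simp)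
      have L2: "?L ((\<lambda>i. 0), 0) = ((\<lambda>i. 0), 0)" by (simp add: U_simp evol_mult_def)
      have zc: "(\<lambda>i. 0::complex) \<in> evol_carrier" by (simp add: evol_carrier_def)
      have ij: "inj_on ?L C'" using bij mi by (simp add: bij_betw_def)
      have "?L (y, 0) = ?L ((\<lambda>i. 0), 0)" using L1 L2 by simp
      moreover have "(y, 0) \<in> C'" "((\<lambda>i. 0), (0::complex)) \<in> C'" using yc zc by auto
      ultimately have "(y, 0) = ((\<lambda>i. 0), (0::complex))" by (rule inj_onD[OF ij])
      then have y0: "y = (\<lambda>i. 0)" by simp
      have "v = 0\<^sub>v m"
      proof (rule eq_vecI)
        fix p assume "p < dim_vec (0\<^sub>v m)"
        then have p: "p < m" by simp
        have "v $ p = y (f p)" using p fS gf by (simp add: y_def)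
        then show "v $ p = 0\<^sub>v m $ p" using y0 p by simp
      qed (use vc in simp)
      with v0 show False by simp
    qed
  next
    assume ne: "\<not> eigenvalue M l"
    let ?N = "M - l \<cdot>\<^sub>m 1\<^sub>m m"
    have noker: "v = 0\<^sub>v m" if vc: "v \<in> carrier_vec m" and nv: "?N *\<^sub>v v = 0\<^sub>v m" for v
    proof (rule ccontr)
      assume v0: "v \<noteq> 0\<^sub>v m"
      have "M *\<^sub>v v = l \<cdot>\<^sub>v v"
      proof (rule eq_vecI)
        fix p assume "p < dim_vec (l \<cdot>\<^sub>v v)"
        then have p: "p < m" using vc by simp
        have "(M *\<^sub>v v) $ p - l * v $ p = 0"
          using Nv[OF p vc, of l] arg_cong[OF nv, of "\<lambda>u. u $ p"] p by simp
        then show "(M *\<^sub>v v) $ p = (l \<cdot>\<^sub>v v) $ p" using p vc by simp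
      qed (use vc dM in simp)
      then have "eigenvalue M l" unfolding eigenvalue_def eigenvector_def dM using vc v0 by blast
      with ne show False by simp
    qed
    have "det ?N \<noteq> 0"
      using det_0_iff_vec_prod_zero[OF Ncar[of l]] noker by blast
    from det_non_zero_imp_unit[OF Ncar this, of "()"]
    obtain B where Bc: "B \<in> carrier_mat m m" and NB: "?N * B = 1\<^sub>m m"
      unfolding Units_def ring_mat_simps by auto
    have into: "?L p \<in> C'" if "p \<in> C'" for p
    proof -
      obtain y \<nu> where p: "p = (y, \<nu>)" by (cases p)
      have yc: "finite {i. y i \<noteq> 0}" using that p by (simp add: evol_carrier_def)
      have "{i. fst (?L p) i \<noteq> 0} \<subseteq> S \<union> {i. y i \<noteq> 0}"
        using em_out a_out by (auto simp: p U_simp)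
      moreover have "finite (S \<union> {i. y i \<noteq> 0})" using finS yc by simp
      ultimately have "fst (?L p) \<in> evol_carrier" by (intro supp_sub_car)
      then show ?thesis by (cases "?L p") auto
    qed
    have inj: "inj_on ?L C'"
    proof (rule inj_onI)
      fix p q assume pc: "p \<in> C'" and qc: "q \<in> C'" and eq: "?L p = ?L q"
      obtain y \<nu> where p: "p = (y, \<nu>)" by (cases p)
      obtain y' \<nu>' where q: "q = (y', \<nu>')" by (cases q)
      have "-l * \<nu> = -l * \<nu>'" using arg_cong[OF eq, of snd] by (simp add: p q U_simp)
      then have nn: "\<nu> = \<nu>'" using l by simp
      define d where "d = (\<lambda>i. y i - y' i)"
      have dz: "evol_mult w a d i - l * d i = 0" for i
        using fun_cong[OF arg_cong[OF eq, of fst], of i] nn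
        by (simp add: p q U_simp d_def em_lin algebra_simps)
      define v where "v = vec m (\<lambda>q. d (f q))"
      have vc: "v \<in> carrier_vec m" by (simp add: v_def)
      have "?N *\<^sub>v v = 0\<^sub>v m"
      proof (rule eq_vecI)
        fix p assume "p < dim_vec (0\<^sub>v m)"
        then have p: "p < m" by simp
        have "evol_mult w a d (f p) = (M *\<^sub>v v) $ p" by (rule em_vec[OF p vc]) (simp add: v_def)
        then show "(?N *\<^sub>v v) $ p = 0\<^sub>v m $ p"
          using Nv[OF p vc, of l] dz[of "f p"] p by (simp add: v_def)
      qed (use Ncar[of l] in simp)
      then have v0: "v = 0\<^sub>v m" using noker vc by blast
      have "d i = 0" for i
      proof (cases "i \<in> S")
        case True
        obtain r where r: "r < m" and ir: "i = f r"
          by (rule that[of "g i"]) (use gS[OF True] in auto)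
        show ?thesis using arg_cong[OF v0, of "\<lambda>u. u $ r"] r ir by (simp add: v_def)
      next
        case False
        then show ?thesis using dz[of i] em_out l by simp
      qed
      then have "y = y'" by (auto simp: d_def)
      then show "p = q" using p q nn by simp
    qed
    have onto: "C' \<subseteq> ?L ` C'"
    proof
      fix p assume pc: "p \<in> C'"
      obtain z \<mu> where p: "p = (z, \<mu>)" by (cases p)
      have zc: "finite {i. z i \<noteq> 0}" using pc p by (simp add: evol_carrier_def)
      have ac: "finite {i. a i \<noteq> 0}" using acar by (simp add: evol_carrier_def)
      define r where "r = (\<lambda>i. z i + (\<mu> / l) * a i)"
      define \<beta> where "\<beta> = B *\<^sub>v vec m (\<lambda>q. r (f q))"
      have bc: "\<beta> \<in> carrier_vec m" using Bc by (simp add: \<beta>_def)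
      have Nb: "?N *\<^sub>v \<beta> = vec m (\<lambda>q. r (f q))"
      proof -
        have "?N *\<^sub>v \<beta> = (?N * B) *\<^sub>v vec m (\<lambda>q. r (f q))"
          unfolding \<beta>_def by (rule assoc_mult_mat_vec[symmetric]) (use Bc Ncar[of l] in auto)
        also have "\<dots> = vec m (\<lambda>q. r (f q))" using NB by simp
        finally show ?thesis .
      qed
      define y where "y = (\<lambda>i. if i \<in> S then \<beta> $ (g i) else - r i / l)"
      define \<nu> where "\<nu> = - \<mu> / l"
      have "{i. y i \<noteq> 0} \<subseteq> S \<union> {i. z i \<noteq> 0} \<union> {i. a i \<noteq> 0}"
        by (auto simp: y_def r_def)
      moreover have "finite (S \<union> {i. z i \<noteq> 0} \<union> {i. a i \<noteq> 0})" using finS zc ac by simp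
      ultimately have yc: "y \<in> evol_carrier" by (intro supp_sub_car)
      have "evol_mult w a y i + (-l) * y i + \<nu> * a i = z i" for i
      proof (cases "i \<in> S")
        case True
        obtain q where q: "q < m" and iq: "i = f q"
          by (rule that[of "g i"]) (use gS[OF True] in auto)
        have "evol_mult w a y (f q) = (M *\<^sub>v \<beta>) $ q"
          by (rule em_vec[OF q bc]) (use fS gf in \<open>auto simp: y_def\<close>)
        moreover have "(M *\<^sub>v \<beta>) $ q - l * \<beta> $ q = r (f q)"
          using Nv[OF q bc, of l] arg_cong[OF Nb, of "\<lambda>u. u $ q"] q by simp
        moreover have "y (f q) = \<beta> $ q" using q fS gf by (simp add: y_def)
        ultimately show ?thesis using l unfolding iq \<nu>_def r_def
          by (simp add: field_simps)
      next
        case False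
        then show ?thesis using em_out a_out l by (simp add: y_def r_def \<nu>_def)
      qed
      moreover have "-l * \<nu> = \<mu>" using l by (simp add: \<nu>_def)
      ultimately have "?L (y, \<nu>) = p" by (simp add: U_simp p)
      then show "p \<in> ?L ` C'" using yc by force
    qed
    have "bij_betw ?L C' C'"
      unfolding bij_betw_def using inj into onto by blast
    then show "m_invertible_in C' (unitz_mult w) (a, -l)" using mi by simp
  qed
qed

end


theorem proposition5p5:
  fixes w :: "'i \<Rightarrow> 'i \<Rightarrow> complex" and a :: "'i \<Rightarrow> complex"
    and f :: "nat \<Rightarrow> 'i" and k m :: nat and l :: complex
  assumes "evol_coeffs w"
    and "\<not> nonzero_trivial_evol w"
    and "a \<in> evol_carrier" and "a \<noteq> (\<lambda>i. 0)"
    and "k = card (supp_el a)"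
    and "m = card (supp_el a \<union> B1_idx w a)"
    and "bij_betw f {0..<m} (supp_el a \<union> B1_idx w a)"
    and "f ` {0..<k} = supp_el a"
  shows "(l \<in> evol_m_spectrum w a \<longleftrightarrow> l = 0 \<or> eigenvalue (W_mat w f m * D_mat a f m) l)
       \<and> (l \<in> evol_spectrum w a \<longleftrightarrow> l = 0 \<or>
            \<not> (\<exists>\<beta>\<in>carrier_vec m. (W_mat w f m * D_mat a f m - l \<cdot>\<^sub>m 1\<^sub>m m) *\<^sub>v \<beta> = vec m (\<lambda>i. a (f i))))
       \<and> (l \<in> evol_spectrum w a \<longrightarrow> l \<in> evol_m_spectrum w a)"
proof -
  interpret evsetup w a f m using assms(7) by unfold_locales
  have nu: "\<not> (\<exists>u. is_unit_of_A w u)" using no_unit[OF assms(2)] by blast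
  have sp: "l \<in> evol_spectrum w a \<longleftrightarrow> \<not> invertible_in C' (unitz_mult w) ((\<lambda>i. 0), 1) (a, - l)"
    using nu by (simp add: evol_spectrum_def)
  have msp: "l \<in> evol_m_spectrum w a \<longleftrightarrow> \<not> m_invertible_in C' (unitz_mult w) (a, - l)"
    using nu by (simp add: evol_m_spectrum_def)
  have ec: "((\<lambda>i. 0), 1) \<in> C'" by (simp add: evol_carrier_def)
  have third: "l \<in> evol_spectrum w a \<longrightarrow> l \<in> evol_m_spectrum w a"
    using minv_inv[OF _ ec] sp msp by blast
  show ?thesis
  proof (cases "l = 0")
    case True
    have "\<not> invertible_in C' (unitz_mult w) ((\<lambda>i. 0), 1) (a, - l)"
      unfolding invertible_in_def using True by (auto simp: unitz_mult_def)
    then show ?thesis using sp third True by blast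
  next
    case False
    show ?thesis using key1[OF False assms(3)] key2[OF False assms(3)] sp msp third False by blast
  qed
qed

end
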